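(* Suppose the noisy label $\tilde Y$ does not have the same distribution as the clean label $Y$. Then there exists a score function $s$ such that $$\mathbb P\big(Y_{\rm test}\in\widehat{\mathcal C}_{\rm noisy}(X_{\rm test})\big)<\mathbb P\big(Y_{\rm test}\in\widehat{\mathcal C}(X_{\rm test})\big).$$ Here $\widehat{\mathcal C}_{\rm noisy}$ is built from the noisy calibration samples and $\widehat{\mathcal C}$ from the clean calibration samples, both with the same score $s$ and level $\alpha$.
   Context: Let $(X_i,Y_i)$, $i=1,\dots,n$, and $(X_{\rm test},Y_{\rm test})$ be i.i.d. Noisy labels $\tilde Y_i=g(Y_i,U_i)$ are produced by a random corruption function $g$ with independent seeds $U_i\sim\mathrm{Unif}[0,1]$. For a score $s:\mathcal X\times\mathcal Y\to\mathbb R$ and level $\alpha\in(0,1)$: - $\hat q_{\rm clean}$ is the $\lceil(n+1)(1-\alpha)\rceil$-th smallest of $s(X_i,Y_i)$, and $\widehat{\mathcal C}(x)=\{y:s(x,y)\le\hat q_{\rm clean}\}$. - $\hat q_{\rm noisy}$ is the $\lceil(n+1)(1-\alpha)\rceil$-th smallest of $s(X_i,\tilde Y_i)$, and $\widehat{\mathcal C}_{\rm noisy}(x)=\{y:s(x,y)\le\hat q_{\rm noisy}\}$. *)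

theory Defs
  imports "HOL-Probability.Probability"
begin

definition unif01 :: "real measure" where
  "unif01 = uniform_measure lborel {0..1}"

definition kth_smallest :: "nat \<Rightarrow> real list \<Rightarrow> real" where
  "kth_smallest k xs = sort xs ! (k - 1)"

definition conf_rank :: "nat \<Rightarrow> real \<Rightarrow> nat" where
  "conf_rank n \<alpha> = nat \<lceil>(real n + 1) * (1 - \<alpha>)\<rceil>"

text \<open>Joint sample space: pairs (X_i,Y_i) for i = 0..n-1 (calibration) and i = n (test),
  all i.i.d. with law D, together with independent seeds U_0..U_(n-1) ~ Unif[0,1].\<close>
definition sample_space :: "('x \<times> 'y) measure \<Rightarrow> nat \<Rightarrow> ((nat \<Rightarrow> 'x \<times> 'y) \<times> (nat \<Rightarrow> real)) measure" where
  "sample_space D n = (PiM {..n} (\<lambda>_. D)) \<Otimes>\<^sub>M (PiM {..<n} (\<lambda>_. unif01))"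

definition cov_clean :: "('x \<times> 'y) measure \<Rightarrow> nat \<Rightarrow> real \<Rightarrow> ('x \<Rightarrow> 'y \<Rightarrow> real) \<Rightarrow> real" where
  "cov_clean D n \<alpha> s = measure (sample_space D n)
     {\<omega> \<in> space (sample_space D n).
        case_prod s (fst \<omega> n) \<le> kth_smallest (conf_rank n \<alpha>) (map (\<lambda>i. case_prod s (fst \<omega> i)) [0..<n])}"

definition cov_noisy :: "('x \<times> 'y) measure \<Rightarrow> ('y \<Rightarrow> real \<Rightarrow> 'y) \<Rightarrow> nat \<Rightarrow> real \<Rightarrow> ('x \<Rightarrow> 'y \<Rightarrow> real) \<Rightarrow> real" where
  "cov_noisy D g n \<alpha> s = measure (sample_space D n)
     {\<omega> \<in> space (sample_space D n).
        case_prod s (fst \<omega> n) \<le> kth_smallest (conf_rank n \<alpha>)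
          (map (\<lambda>i. s (fst (fst \<omega> i)) (g (snd (fst \<omega> i)) (snd \<omega> i))) [0..<n])}"

end

theory Submission
  imports Defs
begin


lemma prob_bind_bernoulli:
  assumes "0 \<le> q" "q \<le> 1"
  shows "measure_pmf.prob (bind_pmf (bernoulli_pmf q) F) E
         = q * measure_pmf.prob (F True) E + (1 - q) * measure_pmf.prob (F False) E"
proof -
  have "emeasure (measure_pmf (bind_pmf (bernoulli_pmf q) F)) E
        = (\<integral>\<^sup>+ x. emeasure (measure_pmf (F x)) E \<partial>measure_pmf (bernoulli_pmf q))"
    by (rule emeasure_bind_pmf)
  also have "\<dots> = (\<Sum>x\<in>UNIV. emeasure (measure_pmf (F x)) E * pmf (bernoulli_pmf q) x)"
    by (rule nn_integral_measure_pmf_support) auto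
  also have "\<dots> = ennreal (measure_pmf.prob (F False) E) * ennreal (1 - q) + ennreal (measure_pmf.prob (F True) E) * ennreal q"
    using assms by (simp add: UNIV_bool measure_pmf.emeasure_eq_measure)
  also have "\<dots> = ennreal (measure_pmf.prob (F False) E * (1 - q)) + ennreal (measure_pmf.prob (F True) E * q)"
    using assms by (simp add: ennreal_mult)
  also have "\<dots> = ennreal (measure_pmf.prob (F False) E * (1 - q) + measure_pmf.prob (F True) E * q)"
    using assms by (simp add: ennreal_plus)
  also have "\<dots> = ennreal (q * measure_pmf.prob (F True) E + (1 - q) * measure_pmf.prob (F False) E)"
    by (rule arg_cong[where f=ennreal]) (simp add: algebra_simps)
  finally have "ennreal (measure_pmf.prob (bind_pmf (bernoulli_pmf q) F) E) = ennreal (q * measure_pmf.prob (F True) E + (1 - q) * measure_pmf.prob (F False) E)"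
    by (simp add: measure_pmf.emeasure_eq_measure)
  then show ?thesis
    using assms by (subst (asm) ennreal_inj) auto
qed

definition H :: "nat \<Rightarrow> nat \<Rightarrow> real \<Rightarrow> real" where
  "H n k q = measure_pmf.prob (binomial_pmf n q) {k..}"

lemma H_0: "0 \<le> q \<Longrightarrow> q \<le> 1 \<Longrightarrow> H 0 k q = (if k = 0 then 1 else 0)"
  by (simp add: H_def binomial_pmf_0 measure_return indicator_def)

lemma H_k0: "H n 0 q = 1"
  by (simp add: H_def)

lemma H_Suc:
  assumes "0 \<le> q" "q \<le> 1"
  shows "H (Suc n) (Suc k) q = q * H n k q + (1 - q) * H n (Suc k) q"
proof -
  have "binomial_pmf (Suc n) q = bind_pmf (bernoulli_pmf q)
          (\<lambda>b. map_pmf (\<lambda>j. (if b then 1 else 0) + j) (binomial_pmf n q))"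
    using assms by (simp add: binomial_pmf_Suc map_pmf_def)
  then show ?thesis
    unfolding H_def using assms
    by (simp add: prob_bind_bernoulli measure_map_pmf vimage_def atLeast_def)
qed

lemma H_nonneg: "0 \<le> H n k q" by (simp add: H_def)
lemma H_le1: "H n k q \<le> 1" by (simp add: H_def)

lemma H_anti: "H n (Suc k) q \<le> H n k q"
  unfolding H_def by (rule measure_pmf.finite_measure_mono) auto

lemma H_big: "0 \<le> q \<Longrightarrow> q \<le> 1 \<Longrightarrow> n < k \<Longrightarrow> H n k q = 0"
  unfolding H_def
  unfolding measure_pmf_zero_iff by (auto simp: set_pmf_binomial_eq split: if_splits)

lemma H_one: "k \<le> n \<Longrightarrow> H n k 1 = 1"
  unfolding H_def by (simp add: measure_pmf.prob_eq_1 AE_measure_pmf_iff)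

lemma H_lt1:
  assumes "0 \<le> q" "q < 1" "1 \<le> k"
  shows "H n k q < 1"
proof -
  have "measure_pmf.prob (binomial_pmf n q) {k..} \<le> measure_pmf.prob (binomial_pmf n q) (UNIV - {0})"
    using assms by (intro measure_pmf.finite_measure_mono) auto
  also have "\<dots> = 1 - pmf (binomial_pmf n q) 0"
    using measure_pmf.prob_compl[of "{0}" "binomial_pmf n q"] by (simp add: measure_pmf_single)
  also have "\<dots> < 1" using assms by simp
  finally show ?thesis by (simp add: H_def)
qed

lemma H_mono: "0 \<le> q \<Longrightarrow> q \<le> q' \<Longrightarrow> q' \<le> 1 \<Longrightarrow> H n k q \<le> H n k q'"
proof (induction n arbitrary: k)
  case 0 then show ?case by (simp add: H_0)
next
  case (Suc n)
  show ?case
  proof (cases k)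
    case 0 then show ?thesis by (simp add: H_k0)
  next
    case (Suc j)
    have a: "H n j q \<le> H n j q'" "H n (Suc j) q \<le> H n (Suc j) q'" using Suc.IH[of j] Suc.IH[of "Suc j"] Suc.prems by auto
    have b: "H n (Suc j) q \<le> H n j q" by (rule H_anti)
    have "q * H n j q + (1 - q) * H n (Suc j) q \<le> q' * H n j q + (1 - q') * H n (Suc j) q"
    proof -
      have "0 \<le> (q' - q) * (H n j q - H n (Suc j) q)" using b Suc.prems by simp
      then show ?thesis by (simp add: algebra_simps)
    qed
    also have "\<dots> \<le> q' * H n j q' + (1 - q') * H n (Suc j) q'"
      using a Suc.prems by (intro add_mono mult_left_mono) auto
    finally show ?thesis using Suc Suc.prems by (simp add: H_Suc)
  qed
qed

lemma H_strict: "0 \<le> q \<Longrightarrow> q < q' \<Longrightarrow> q' \<le> 1 \<Longrightarrow> 1 \<le> k \<Longrightarrow> k \<le> n \<Longrightarrow> H n k q < H n k q'"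
proof (induction n arbitrary: k)
  case 0 then show ?case by simp
next
  case (Suc n)
  then obtain j where k: "k = Suc j" by (cases k) auto
  show ?case
  proof (cases "q' = 1")
    case True
    then show ?thesis using Suc.prems H_lt1[of q k "Suc n"] H_one[of k "Suc n"] by simp
  next
    case False
    have b: "H n (Suc j) q \<le> H n j q" by (rule H_anti)
    have m: "H n j q \<le> H n j q'" "H n (Suc j) q \<le> H n (Suc j) q'"
      using H_mono[of q q' n j] H_mono[of q q' n "Suc j"] Suc.prems by auto
    have e1: "q * H n j q + (1 - q) * H n (Suc j) q \<le> q' * H n j q + (1 - q') * H n (Suc j) q"
    proof -
      have "0 \<le> (q' - q) * (H n j q - H n (Suc j) q)" using b Suc.prems by simp
      then show ?thesis by (simp add: algebra_simps)
    qed
    show ?thesis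
    proof (cases "Suc j \<le> n")
      case True
      have "H n (Suc j) q < H n (Suc j) q'" using Suc.IH[of "Suc j"] Suc.prems True by auto
      then have "(1 - q') * H n (Suc j) q < (1 - q') * H n (Suc j) q'"
        using False Suc.prems by (intro mult_strict_left_mono) auto
      moreover have "q' * H n j q \<le> q' * H n j q'" using m Suc.prems by (intro mult_left_mono) auto
      moreover have "H (Suc n) k q = q * H n j q + (1 - q) * H n (Suc j) q"
        "H (Suc n) k q' = q' * H n j q' + (1 - q') * H n (Suc j) q'"
        using k Suc.prems by (simp_all add: H_Suc)
      ultimately show ?thesis using e1 by linarith
    next
      case False
      then have jn: "j = n" using Suc.prems k by auto
      have z: "H n (Suc n) q = 0" "H n (Suc n) q' = 0" using Suc.prems by (auto intro: H_big)
      have "q * H n n q < q' * H n n q'"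
      proof (cases "n = 0")
        case True then show ?thesis using Suc.prems by (simp add: H_k0)
      next
        case False
        have "H n n q < H n n q'" using Suc.IH[of n] Suc.prems False by auto
        moreover have "0 \<le> H n n q" by (rule H_nonneg)
        ultimately have h1: "H n n q \<le> H n n q'" "0 < H n n q'" by auto
        have "q * H n n q \<le> q * H n n q'" using h1 Suc.prems by (intro mult_left_mono) auto
        also have "\<dots> < q' * H n n q'" using h1 Suc.prems by (intro mult_strict_right_mono) auto
        finally show ?thesis .
      qed
      then show ?thesis using k jn z Suc.prems by (simp add: H_Suc)
    qed
  qed
qed



lemma prob_cov_pmf:
  assumes q: "0 \<le> q" "q \<le> 1" and p: "0 \<le> p" "p \<le> 1"
  shows "measure_pmf.prob (Pi_pmf {..n} False (\<lambda>i. bernoulli_pmf (if i < n then q else p)))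
           {\<tau>. \<tau> n \<or> card {i\<in>{..<n}. \<tau> i} < k} = p + (1 - p) * (1 - H n k q)"
proof -
  let ?R = "\<lambda>i. bernoulli_pmf (if i < n then q else p)"
  let ?Q = "Pi_pmf {..<n} False (\<lambda>_. bernoulli_pmf q)"
  let ?E = "{\<tau>. \<tau> n \<or> card {i\<in>{..<n}. \<tau> i} < k}"
  have "{..n} = insert n {..<n}" by auto
  then have "Pi_pmf {..n} False ?R = bind_pmf (?R n) (\<lambda>y. bind_pmf (Pi_pmf {..<n} False ?R) (\<lambda>f. return_pmf (f(n:=y))))"
    by (simp add: Pi_pmf_insert')
  also have "Pi_pmf {..<n} False ?R = ?Q"
    by (rule Pi_pmf_cong) auto
  finally have eq0: "Pi_pmf {..n} False ?R = bind_pmf (?R n) (\<lambda>y. bind_pmf ?Q (\<lambda>f. return_pmf (f(n:=y))))" .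
  have mp: "(\<lambda>y. bind_pmf ?Q (\<lambda>f. return_pmf (f(n:=y)))) = (\<lambda>y. map_pmf (\<lambda>f. f(n:=y)) ?Q)"
    by (simp add: map_pmf_def)
  have Rn: "?R n = bernoulli_pmf p" by simp
  have eq: "Pi_pmf {..n} False ?R = bind_pmf (bernoulli_pmf p) (\<lambda>y. map_pmf (\<lambda>f. f(n:=y)) ?Q)"
    using eq0 by (simp only: Rn mp)
  have cardeq2: "{i. i < n \<and> (if i = n then a else b i)} = {i. i < n \<and> b i}" for a and b :: "nat \<Rightarrow> bool"
    by auto
  have "(\<lambda>f. f(n:=True)) -` ?E = UNIV" by auto
  then have pT: "measure_pmf.prob (map_pmf (\<lambda>f. f(n:=True)) ?Q) ?E = 1"
    by (simp add: measure_map_pmf)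
  have "(\<lambda>f. f(n:=False)) -` ?E = {f. card {x\<in>{..<n}. f x} < k}" by (auto simp: cardeq2)
  then have pF: "measure_pmf.prob (map_pmf (\<lambda>f. f(n:=False)) ?Q) ?E
      = measure_pmf.prob (map_pmf (\<lambda>f. card {x\<in>{..<n}. f x}) ?Q) {..<k}"
    by (simp add: measure_map_pmf vimage_def lessThan_def)
  also have "map_pmf (\<lambda>f. card {x\<in>{..<n}. f x}) ?Q = binomial_pmf n q"
    using q by (intro binomial_pmf_altdef'[symmetric]) auto
  also have "measure_pmf.prob (binomial_pmf n q) {..<k} = 1 - H n k q"
    unfolding H_def using measure_pmf.prob_compl[of "{k..}" "binomial_pmf n q"]
    by (simp add: Compl_eq_Diff_UNIV[symmetric] Compl_atLeast)
  finally have pF': "measure_pmf.prob (map_pmf (\<lambda>f. f(n:=False)) ?Q) ?E = 1 - H n k q" .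
  have "measure_pmf.prob (bind_pmf (bernoulli_pmf p) (\<lambda>y. map_pmf (\<lambda>f. f(n:=y)) ?Q)) ?E
     = p * measure_pmf.prob (map_pmf (\<lambda>f. f(n:=True)) ?Q) ?E
       + (1 - p) * measure_pmf.prob (map_pmf (\<lambda>f. f(n:=False)) ?Q) ?E"
    by (rule prob_bind_bernoulli) (use p in auto)
  then show ?thesis
    unfolding eq pT pF' by simp
qed



lemma kth01:
  fixes xs :: "real list"
  assumes "set xs \<subseteq> {0,1}" "1 \<le> k" "k \<le> length xs"
  shows "kth_smallest k xs = (if k \<le> length (filter (\<lambda>x. x = 0) xs) then 0 else 1)"
proof -
  let ?a = "filter (\<lambda>x. x = 0) xs" and ?b = "filter (\<lambda>x. x \<noteq> 0) xs"
  have s: "sort xs = ?a @ ?b"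
  proof (rule properties_for_sort)
    show "mset (?a @ ?b) = mset xs" by simp
    have "\<forall>x\<in>set ?b. x = 1" using assms(1) by auto
    then have "replicate (length ?b) 1 = ?b" by (intro replicate_length_same) 
    moreover have "replicate (length ?a) 0 = ?a" by (intro replicate_length_same) auto
    ultimately have "sorted ?a" "sorted ?b" by (metis sorted_replicate)+
    then show "sorted (?a @ ?b)" using \<open>\<forall>x\<in>set ?b. x = 1\<close>
      by (auto simp: sorted_append)
  qed
  have lb: "length ?a + length ?b = length xs" by (simp add: sum_length_filter_compl)
  show ?thesis
  proof (cases "k \<le> length ?a")
    case True
    then have "?a ! (k - 1) \<in> set ?a" using assms by (intro nth_mem) auto
    then show ?thesis using True assms unfolding kth_smallest_def s
      by (auto simp: nth_append)
  next
    case False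
    then have "?b ! (k - 1 - length ?a) \<in> set ?b" using assms lb by (intro nth_mem) auto
    then show ?thesis using False assms unfolding kth_smallest_def s
      by (auto simp: nth_append)
  qed
qed



lemma prod_meas:
  fixes D :: "'a measure" and V :: "'b measure" and n :: nat
  assumes PD: "prob_space D" and PV: "prob_space V"
    and K: "\<And>i. i < n \<Longrightarrow> K i \<in> sets (D \<Otimes>\<^sub>M V)" and Kn: "Kn \<in> sets D"
  shows "emeasure (PiM {..n} (\<lambda>_. D) \<Otimes>\<^sub>M PiM {..<n} (\<lambda>_. V))
     {\<omega> \<in> space (PiM {..n} (\<lambda>_. D) \<Otimes>\<^sub>M PiM {..<n} (\<lambda>_. V)).
        (\<forall>i<n. (fst \<omega> i, snd \<omega> i) \<in> K i) \<and> fst \<omega> n \<in> Kn}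
   = (\<Prod>i<n. emeasure (D \<Otimes>\<^sub>M V) (K i)) * emeasure D Kn"
proof -
  interpret D: prob_space D by fact
  interpret V: prob_space V by fact
  interpret U: prob_space "PiM {..<n} (\<lambda>_. V)" by (rule prob_space_PiM) (use PV in auto)
  interpret PD: product_sigma_finite "\<lambda>_::nat. D"
    by (simp add: product_sigma_finite_def D.sigma_finite_measure_axioms)
  interpret PV: product_sigma_finite "\<lambda>_::nat. V"
    by (simp add: product_sigma_finite_def V.sigma_finite_measure_axioms)
  let ?M = "PiM {..n} (\<lambda>_. D)" and ?U = "PiM {..<n} (\<lambda>_. V)"
  let ?X = "{\<omega> \<in> space (?M \<Otimes>\<^sub>M ?U). (\<forall>i<n. (fst \<omega> i, snd \<omega> i) \<in> K i) \<and> fst \<omega> n \<in> Kn}"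
  have mf: "(\<lambda>\<omega>. (fst \<omega> i, snd \<omega> i)) \<in> measurable (?M \<Otimes>\<^sub>M ?U) (D \<Otimes>\<^sub>M V)" if "i < n" for i
  proof -
    have i1: "i \<in> {..n}" and i2: "i \<in> {..<n}" using that by auto
    show ?thesis
      by (rule measurable_Pair[OF measurable_compose[OF measurable_fst measurable_component_singleton[OF i1]]
        measurable_compose[OF measurable_snd measurable_component_singleton[OF i2]]])
  qed
  have pi: "Measurable.pred (?M \<Otimes>\<^sub>M ?U) (\<lambda>\<omega>. (fst \<omega> i, snd \<omega> i) \<in> K i)" if "i \<in> {..<n}" for i
    using that K[of i] mf[of i] by (intro pred_sets2) auto
  have pn: "Measurable.pred (?M \<Otimes>\<^sub>M ?U) (\<lambda>\<omega>. fst \<omega> n \<in> Kn)"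
    by (intro pred_sets2[OF Kn]) measurable
  have "Measurable.pred (?M \<Otimes>\<^sub>M ?U) (\<lambda>\<omega>. (\<forall>i\<in>{..<n}. (fst \<omega> i, snd \<omega> i) \<in> K i) \<and> fst \<omega> n \<in> Kn)"
    using pi pn by (intro pred_intros_logic pred_intros_finite) auto
  then have Xs: "?X \<in> sets (?M \<Otimes>\<^sub>M ?U)"
    unfolding pred_def Ball_def lessThan_iff .
  have "emeasure (?M \<Otimes>\<^sub>M ?U) ?X = (\<integral>\<^sup>+a. emeasure ?U (Pair a -` ?X) \<partial>?M)"
    by (rule U.emeasure_pair_measure_alt[OF Xs])
  also have "\<dots> = (\<integral>\<^sup>+a. (\<Prod>i\<in>{..n}. (if i < n then emeasure V (Pair (a i) -` K i) else indicator Kn (a i))) \<partial>?M)"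
  proof (rule nn_integral_cong)
    fix a assume a: "a \<in> space ?M"
    show "emeasure ?U (Pair a -` ?X) = (\<Prod>i\<in>{..n}. (if i < n then emeasure V (Pair (a i) -` K i) else indicator Kn (a i)))"
    proof (cases "a n \<in> Kn")
      case True
      have "Pair a -` ?X = PiE {..<n} (\<lambda>i. Pair (a i) -` K i)"
        using a True K[THEN sets.sets_into_space]
        by (auto simp: space_pair_measure space_PiM PiE_iff subset_eq extensional_def) (meson SigmaD2 lessThan_iff)
      then have "emeasure ?U (Pair a -` ?X) = emeasure ?U (PiE {..<n} (\<lambda>i. Pair (a i) -` K i))"
        by simp
      also have "\<dots> = (\<Prod>i<n. emeasure V (Pair (a i) -` K i))"
        by (rule PV.emeasure_PiM) (auto intro: sets_Pair1 K)
      also have "\<dots> = (\<Prod>i\<in>{..n}. (if i < n then emeasure V (Pair (a i) -` K i) else indicator Kn (a i)))"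
        using True by (simp add: lessThan_Suc_atMost[symmetric])
      finally show ?thesis .
    next
      case False
      then have "Pair a -` ?X = {}" by auto
      then show ?thesis using False by (simp add: lessThan_Suc_atMost[symmetric])
    qed
  qed
  also have "\<dots> = (\<Prod>i\<in>{..n}. (\<integral>\<^sup>+x. (if i < n then emeasure V (Pair x -` K i) else indicator Kn x) \<partial>D))"
    apply (rule PD.product_nn_integral_prod)
     apply simp
    subgoal for i by (cases "i < n") (simp_all add: V.measurable_emeasure_Pair K Kn borel_measurable_indicator)
    done
  also have "\<dots> = (\<Prod>i\<in>{..n}. (if i < n then emeasure (D \<Otimes>\<^sub>M V) (K i) else emeasure D Kn))"
    by (intro prod.cong refl) (auto simp: V.emeasure_pair_measure_alt[OF K] Kn)
  also have "\<dots> = (\<Prod>i<n. emeasure (D \<Otimes>\<^sub>M V) (K i)) * emeasure D Kn"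
    by (simp add: lessThan_Suc_atMost[symmetric])
  finally show ?thesis .
qed



lemma prob_unif01: "prob_space unif01"
  unfolding unif01_def by (rule prob_space_uniform_measure) auto

lemma prod_sets:
  fixes D :: "'a measure" and V :: "'b measure" and n :: nat
  assumes K: "\<And>i. i < n \<Longrightarrow> K i \<in> sets (D \<Otimes>\<^sub>M V)" and Kn: "Kn \<in> sets D"
  shows "{\<omega> \<in> space (PiM {..n} (\<lambda>_. D) \<Otimes>\<^sub>M PiM {..<n} (\<lambda>_. V)).
        (\<forall>i<n. (fst \<omega> i, snd \<omega> i) \<in> K i) \<and> fst \<omega> n \<in> Kn} \<in> sets (PiM {..n} (\<lambda>_. D) \<Otimes>\<^sub>M PiM {..<n} (\<lambda>_. V))"
proof -
  let ?M = "PiM {..n} (\<lambda>_. D)" and ?U = "PiM {..<n} (\<lambda>_. V)"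
  have mf: "(\<lambda>\<omega>. (fst \<omega> i, snd \<omega> i)) \<in> measurable (?M \<Otimes>\<^sub>M ?U) (D \<Otimes>\<^sub>M V)" if "i < n" for i
  proof -
    have i1: "i \<in> {..n}" and i2: "i \<in> {..<n}" using that by auto
    show ?thesis
      by (rule measurable_Pair[OF measurable_compose[OF measurable_fst measurable_component_singleton[OF i1]]
        measurable_compose[OF measurable_snd measurable_component_singleton[OF i2]]])
  qed
  have pi: "Measurable.pred (?M \<Otimes>\<^sub>M ?U) (\<lambda>\<omega>. (fst \<omega> i, snd \<omega> i) \<in> K i)" if "i \<in> {..<n}" for i
    using that K[of i] mf[of i] by (intro pred_sets2) auto
  have pn: "Measurable.pred (?M \<Otimes>\<^sub>M ?U) (\<lambda>\<omega>. fst \<omega> n \<in> Kn)"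
    by (intro pred_sets2[OF Kn]) measurable
  have "Measurable.pred (?M \<Otimes>\<^sub>M ?U) (\<lambda>\<omega>. (\<forall>i\<in>{..<n}. (fst \<omega> i, snd \<omega> i) \<in> K i) \<and> fst \<omega> n \<in> Kn)"
    using pi pn by (intro pred_intros_logic pred_intros_finite) auto
  then show ?thesis
    unfolding pred_def Ball_def lessThan_iff .
qed

lemma sets_eqb: "{x\<in>space M. P x} \<in> sets M \<Longrightarrow> {x\<in>space M. P x = b} \<in> sets M"
proof (cases b)
  case False
  assume "{x\<in>space M. P x} \<in> sets M"
  then have "space M - {x\<in>space M. P x} \<in> sets M" by auto
  moreover have "space M - {x\<in>space M. P x} = {x\<in>space M. P x = b}" using False by auto
  ultimately show ?thesis by simp
qed simp

lemma prob_eqb: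
  assumes "prob_space M" "{x\<in>space M. P x} \<in> sets M"
  shows "measure M {x\<in>space M. P x = b} = pmf (bernoulli_pmf (measure M {x\<in>space M. P x})) b"
proof -
  interpret prob_space M by fact
  have r: "0 \<le> prob {x\<in>space M. P x}" "prob {x\<in>space M. P x} \<le> 1" by auto
  show ?thesis
  proof (cases b)
    case True then show ?thesis using r by simp
  next
    case False
    have "space M - {x\<in>space M. P x} = {x\<in>space M. P x = b}" using False by auto
    then show ?thesis using prob_compl[OF assms(2)] False r by simp
  qed
qed



lemma cov_pattern:
  fixes D :: "('a \<times> 'b) measure" and n :: nat and Zc :: "('a \<times> 'b) \<times> real \<Rightarrow> bool" and Zt :: "'a \<times> 'b \<Rightarrow> bool"
    and Ev :: "(nat \<Rightarrow> bool) set"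
  assumes PD: "prob_space D"
    and mZc: "{x\<in>space (D \<Otimes>\<^sub>M unif01). Zc x} \<in> sets (D \<Otimes>\<^sub>M unif01)"
    and mZt: "{x\<in>space D. Zt x} \<in> sets D"
  shows "measure (sample_space D n) {\<omega>\<in>space (sample_space D n).
            (\<lambda>i. if i < n then Zc (fst \<omega> i, snd \<omega> i) else if i = n then Zt (fst \<omega> n) else False) \<in> Ev}
       = measure_pmf.prob (Pi_pmf {..n} False (\<lambda>i. bernoulli_pmf (if i < n
            then measure (D \<Otimes>\<^sub>M unif01) {x\<in>space (D \<Otimes>\<^sub>M unif01). Zc x}
            else measure D {x\<in>space D. Zt x}))) Ev"
proof -
  interpret D: prob_space D by fact
  interpret V: prob_space unif01 by (rule prob_unif01)
  interpret DV: prob_space "D \<Otimes>\<^sub>M unif01" by (rule prob_space_pair) unfold_locales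
  let ?M = "PiM {..n} (\<lambda>_. D)" and ?U = "PiM {..<n} (\<lambda>_. unif01)"
  let ?S = "sample_space D n"
  interpret S: prob_space ?S unfolding sample_space_def
    by (intro prob_space_pair prob_space_PiM) (auto intro: PD prob_unif01)
  let ?pc = "measure (D \<Otimes>\<^sub>M unif01) {x\<in>space (D \<Otimes>\<^sub>M unif01). Zc x}"
  let ?pt = "measure D {x\<in>space D. Zt x}"
  let ?R = "\<lambda>i. bernoulli_pmf (if i < n then ?pc else ?pt)"
  define \<Phi> where "\<Phi> \<omega> = (\<lambda>i. if i < n then Zc (fst \<omega> i, snd \<omega> i) else if i = n then Zt (fst \<omega> n) else False)"
    for \<omega> :: "(nat \<Rightarrow> 'a \<times> 'b) \<times> (nat \<Rightarrow> real)"
  define P where "P = PiE_dflt {..n} False (\<lambda>_. UNIV :: bool set)"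
  have finP: "finite P" unfolding P_def by (intro finite_PiE_dflt) auto
  have PhiP: "\<Phi> \<omega> \<in> P" for \<omega> by (auto simp: P_def PiE_dflt_def \<Phi>_def)
  define K where "K \<tau> i = {x\<in>space (D \<Otimes>\<^sub>M unif01). Zc x = \<tau> i}" for \<tau> :: "nat \<Rightarrow> bool" and i :: nat
  define Kn where "Kn \<tau> = {x\<in>space D. Zt x = \<tau> n}" for \<tau> :: "nat \<Rightarrow> bool"
  have Ks: "K \<tau> i \<in> sets (D \<Otimes>\<^sub>M unif01)" for \<tau> i unfolding K_def by (rule sets_eqb[OF mZc])
  have Kns: "Kn \<tau> \<in> sets D" for \<tau> unfolding Kn_def by (rule sets_eqb[OF mZt])
  define A where "A \<tau> = {\<omega>\<in>space ?S. (\<forall>i<n. (fst \<omega> i, snd \<omega> i) \<in> K \<tau> i) \<and> fst \<omega> n \<in> Kn \<tau>}" for \<tau>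
  have As: "A \<tau> \<in> sets ?S" for \<tau> unfolding A_def sample_space_def by (rule prod_sets[OF Ks Kns])
  have spc: "fst \<omega> i \<in> space D" "snd \<omega> i \<in> space unif01" if "\<omega> \<in> space ?S" "i < n" for \<omega> i
    using that by (auto simp: sample_space_def space_pair_measure space_PiM PiE_iff)
  have spn: "fst \<omega> n \<in> space D" if "\<omega> \<in> space ?S" for \<omega>
    using that by (auto simp: sample_space_def space_pair_measure space_PiM PiE_iff)
  have Aeq: "A \<tau> = {\<omega>\<in>space ?S. \<Phi> \<omega> = \<tau>}" if "\<tau> \<in> P" for \<tau>
  proof (intro set_eqI iffI)
    fix \<omega> assume "\<omega> \<in> A \<tau>"
    then show "\<omega> \<in> {\<omega>\<in>space ?S. \<Phi> \<omega> = \<tau>}"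
      using that by (auto simp: A_def K_def Kn_def \<Phi>_def P_def PiE_dflt_def fun_eq_iff)
  next
    fix \<omega> assume w: "\<omega> \<in> {\<omega>\<in>space ?S. \<Phi> \<omega> = \<tau>}"
    then have "\<omega> \<in> space ?S" "\<Phi> \<omega> = \<tau>" by auto
    then show "\<omega> \<in> A \<tau>"
      using spc spn by (auto simp: A_def K_def Kn_def \<Phi>_def space_pair_measure)
  qed
  have Ueq: "{\<omega>\<in>space ?S. \<Phi> \<omega> \<in> Ev} = (\<Union>\<tau>\<in>Ev \<inter> P. A \<tau>)"
    using PhiP by (auto simp: Aeq)
  have disj: "disjoint_family_on A (Ev \<inter> P)"
    by (auto simp: disjoint_family_on_def Aeq)
  have "S.prob (\<Union>\<tau>\<in>Ev \<inter> P. A \<tau>) = (\<Sum>\<tau>\<in>Ev \<inter> P. S.prob (A \<tau>))"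
    by (rule measure_finite_Union) (use finP As disj in \<open>auto simp: S.emeasure_finite\<close>)
  then have "S.prob {\<omega>\<in>space ?S. \<Phi> \<omega> \<in> Ev} = (\<Sum>\<tau>\<in>Ev \<inter> P. S.prob (A \<tau>))"
    using Ueq by simp
  also have "\<dots> = (\<Sum>\<tau>\<in>Ev \<inter> P. pmf (Pi_pmf {..n} False ?R) \<tau>)"
  proof (rule sum.cong[OF refl])
    fix \<tau> assume \<tau>: "\<tau> \<in> Ev \<inter> P"
    have "ennreal (S.prob (A \<tau>)) = emeasure ?S (A \<tau>)" by (simp add: S.emeasure_eq_measure)
    also have "\<dots> = (\<Prod>i<n. emeasure (D \<Otimes>\<^sub>M unif01) (K \<tau> i)) * emeasure D (Kn \<tau>)"
      unfolding A_def sample_space_def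
      by (rule prod_meas[OF PD prob_unif01 Ks Kns])
    also have "\<dots> = ennreal ((\<Prod>i<n. measure (D \<Otimes>\<^sub>M unif01) (K \<tau> i)) * measure D (Kn \<tau>))"
      by (simp add: DV.emeasure_eq_measure D.emeasure_eq_measure prod_ennreal ennreal_mult prod_nonneg)
    finally have e0: "ennreal (S.prob (A \<tau>)) = ennreal ((\<Prod>i<n. measure (D \<Otimes>\<^sub>M unif01) (K \<tau> i)) * measure D (Kn \<tau>))" .
    have e1: "S.prob (A \<tau>) = (\<Prod>i<n. measure (D \<Otimes>\<^sub>M unif01) (K \<tau> i)) * measure D (Kn \<tau>)"
    proof -
      have "0 \<le> (\<Prod>i<n. measure (D \<Otimes>\<^sub>M unif01) (K \<tau> i)) * measure D (Kn \<tau>)"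
        by (intro mult_nonneg_nonneg prod_nonneg) auto
      then show ?thesis using e0 by (subst (asm) ennreal_inj) auto
    qed
    have "(\<Prod>i<n. measure (D \<Otimes>\<^sub>M unif01) (K \<tau> i)) * measure D (Kn \<tau>)
        = (\<Prod>i<n. pmf (?R i) (\<tau> i)) * pmf (?R n) (\<tau> n)"
      unfolding K_def Kn_def
      by (simp add: prob_eqb[OF DV.prob_space_axioms mZc] prob_eqb[OF PD mZt])
    also have "\<dots> = (\<Prod>i\<in>{..n}. pmf (?R i) (\<tau> i))"
      by (simp add: lessThan_Suc_atMost[symmetric])
    also have "\<dots> = pmf (Pi_pmf {..n} False ?R) \<tau>"
      using \<tau> by (intro pmf_Pi'[symmetric]) (auto simp: P_def PiE_dflt_def)
    finally show "S.prob (A \<tau>) = pmf (Pi_pmf {..n} False ?R) \<tau>" using e1 by simp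
  qed
  also have "\<dots> = measure_pmf.prob (Pi_pmf {..n} False ?R) (Ev \<inter> P)"
    using finP by (simp add: measure_measure_pmf_finite)
  also have "\<dots> = measure_pmf.prob (Pi_pmf {..n} False ?R) Ev"
  proof -
    have sub: "set_pmf (Pi_pmf {..n} False ?R) \<subseteq> P"
      using set_Pi_pmf_subset'[of "{..n}" False ?R] by (auto simp: P_def PiE_dflt_def)
    have "Ev \<inter> P \<inter> set_pmf (Pi_pmf {..n} False ?R) = Ev \<inter> set_pmf (Pi_pmf {..n} False ?R)"
      using sub by auto
    then have "measure_pmf.prob (Pi_pmf {..n} False ?R) (Ev \<inter> P \<inter> set_pmf (Pi_pmf {..n} False ?R))
       = measure_pmf.prob (Pi_pmf {..n} False ?R) (Ev \<inter> set_pmf (Pi_pmf {..n} False ?R))" by simp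
    then show ?thesis by (simp only: measure_Int_set_pmf)
  qed
  finally show ?thesis unfolding \<Phi>_def .
qed



lemma cov_event:
  fixes xs :: "real list" and t :: real and c :: nat
  assumes "set xs \<subseteq> {0,1}" "t \<in> {0,1}" "1 \<le> k" "k \<le> length xs"
  shows "(t \<le> kth_smallest k xs) \<longleftrightarrow> (t = 0 \<or> length (filter (\<lambda>x. x = 0) xs) < k)"
  using kth01[OF assms(1,3,4)] assms(2) by auto

lemma count_zero:
  "length (filter (\<lambda>x. x = 0) (map (\<lambda>i. if P i then (0::real) else 1) [0..<n]))
   = card {i\<in>{..<n}. P i}"
  unfolding length_filter_conv_card by (intro arg_cong[where f=card]) (auto split: if_splits)

theorem mainTheorem6:
  fixes LX :: "'x measure" and LY :: "'y measure"
    and D :: "('x \<times> 'y) measure"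
    and g :: "'y \<Rightarrow> real \<Rightarrow> 'y"
    and n :: nat and \<alpha> :: real
  assumes "prob_space D"
    and "sets D = sets (LX \<Otimes>\<^sub>M LY)"
    and "case_prod g \<in> measurable (LY \<Otimes>\<^sub>M borel) LY"
    and "0 < \<alpha>" and "\<alpha> < 1"
    and "conf_rank n \<alpha> \<le> n"
    and "distr (D \<Otimes>\<^sub>M unif01) LY (\<lambda>(xy, u). g (snd xy) u) \<noteq> distr D LY snd"
  shows "\<exists>s :: 'x \<Rightarrow> 'y \<Rightarrow> real. case_prod s \<in> borel_measurable (LX \<Otimes>\<^sub>M LY) \<and>
           cov_noisy D g n \<alpha> s < cov_clean D n \<alpha> s"
proof -
  note PD = assms(1) and sD = assms(2) and gm = assms(3) and kn = assms(6) and ne = assms(7)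
  interpret D: prob_space D by fact
  interpret V: prob_space unif01 by (rule prob_unif01)
  interpret DV: prob_space "D \<Otimes>\<^sub>M unif01" by (rule prob_space_pair) unfold_locales
  define h where "h = (\<lambda>(xy::'x\<times>'y, u::real). g (snd xy) u)"
  have sV: "sets unif01 = sets borel" unfolding unif01_def by simp
  have hm: "h \<in> measurable (D \<Otimes>\<^sub>M unif01) LY"
  proof -
    have "h = case_prod g \<circ> (\<lambda>(xy, u). (snd xy, u))" by (auto simp: h_def fun_eq_iff)
    moreover have "(\<lambda>(xy::'x\<times>'y, u::real). (snd xy, u)) \<in> measurable ((LX \<Otimes>\<^sub>M LY) \<Otimes>\<^sub>M borel) (LY \<Otimes>\<^sub>M borel)"
      by measurable
    ultimately have "h \<in> measurable ((LX \<Otimes>\<^sub>M LY) \<Otimes>\<^sub>M borel) LY"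
      using gm by (simp add: measurable_comp)
    then show ?thesis
      using sD sV by (subst measurable_cong_sets[OF sets_pair_measure_cong[OF sD sV] refl])
  qed
  have sm: "snd \<in> measurable D LY"
    using sD by (subst measurable_cong_sets[OF sD refl]) measurable
  interpret ND: prob_space "distr (D \<Otimes>\<^sub>M unif01) LY h" by (rule DV.prob_space_distr[OF hm])
  interpret CD: prob_space "distr D LY snd" by (rule D.prob_space_distr[OF sm])
  obtain A0 where A0: "A0 \<in> sets LY"
    "emeasure (distr (D \<Otimes>\<^sub>M unif01) LY h) A0 \<noteq> emeasure (distr D LY snd) A0"
    using ne measure_eqI[of "distr (D \<Otimes>\<^sub>M unif01) LY h" "distr D LY snd"] unfolding h_def by auto
  have neq: "DV.prob {x\<in>space (D \<Otimes>\<^sub>M unif01). h x \<in> A0} \<noteq> D.prob {z\<in>space D. snd z \<in> A0}"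
    using A0 hm sm
    by (auto simp: ND.emeasure_eq_measure CD.emeasure_eq_measure measure_distr vimage_def Int_def conj_commute)
  obtain A where A: "A \<in> sets LY"
    and lt: "D.prob {z\<in>space D. snd z \<in> A} < DV.prob {x\<in>space (D \<Otimes>\<^sub>M unif01). h x \<in> A}"
  proof (cases "D.prob {z\<in>space D. snd z \<in> A0} < DV.prob {x\<in>space (D \<Otimes>\<^sub>M unif01). h x \<in> A0}")
    case True then show ?thesis using that A0 by blast
  next
    case False
    then have lt0: "DV.prob {x\<in>space (D \<Otimes>\<^sub>M unif01). h x \<in> A0} < D.prob {z\<in>space D. snd z \<in> A0}"
      using neq by linarith
    let ?B = "space LY - A0"
    have e1: "{z\<in>space D. snd z \<in> ?B} = space D - {z\<in>space D. snd z \<in> A0}"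
      using measurable_space[OF sm] by auto
    have e2: "{x\<in>space (D \<Otimes>\<^sub>M unif01). h x \<in> ?B} = space (D \<Otimes>\<^sub>M unif01) - {x\<in>space (D \<Otimes>\<^sub>M unif01). h x \<in> A0}"
      using measurable_space[OF hm] by auto
    have m1: "{z\<in>space D. snd z \<in> A0} \<in> sets D" using sm A0(1) by measurable
    have m2: "{x\<in>space (D \<Otimes>\<^sub>M unif01). h x \<in> A0} \<in> sets (D \<Otimes>\<^sub>M unif01)" using hm A0(1) by measurable
    have "D.prob {z\<in>space D. snd z \<in> ?B} < DV.prob {x\<in>space (D \<Otimes>\<^sub>M unif01). h x \<in> ?B}"
      unfolding e1 e2 using D.prob_compl[OF m1] DV.prob_compl[OF m2] lt0 by simp
    moreover have "?B \<in> sets LY" using A0(1) by auto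
    ultimately show ?thesis using that by blast
  qed
  define p where "p = D.prob {z\<in>space D. snd z \<in> A}"
  define q where "q = DV.prob {x\<in>space (D \<Otimes>\<^sub>M unif01). h x \<in> A}"
  have pq: "0 \<le> p" "p < q" "q \<le> 1" using lt by (auto simp: p_def q_def)
  define s where "s = (\<lambda>(x::'x) (y::'y). if y \<in> A then (0::real) else 1)"
  have smeas: "case_prod s \<in> borel_measurable (LX \<Otimes>\<^sub>M LY)"
    unfolding s_def using A by measurable
  define k where "k = conf_rank n \<alpha>"
  have k1: "1 \<le> k"
  proof -
    have "0 < (real n + 1) * (1 - \<alpha>)" using assms(5) by simp
    then show ?thesis unfolding k_def conf_rank_def by linarith
  qed
  have kn': "k \<le> n" using kn by (simp add: k_def)
  define Ev where "Ev = {\<tau>::nat \<Rightarrow> bool. \<tau> n \<or> card {i\<in>{..<n}. \<tau> i} < k}"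
  have mA: "{z\<in>space D. snd z \<in> A} \<in> sets D" using sm A by measurable
  have mc: "{x\<in>space (D \<Otimes>\<^sub>M unif01). snd (fst x) \<in> A} \<in> sets (D \<Otimes>\<^sub>M unif01)" using sm A by measurable
  have mn: "{x\<in>space (D \<Otimes>\<^sub>M unif01). h x \<in> A} \<in> sets (D \<Otimes>\<^sub>M unif01)" using hm A by measurable
  have pc: "DV.prob {x\<in>space (D \<Otimes>\<^sub>M unif01). snd (fst x) \<in> A} = p"
  proof -
    have "{x\<in>space (D \<Otimes>\<^sub>M unif01). snd (fst x) \<in> A} = {z\<in>space D. snd z \<in> A} \<times> space unif01"
      by (auto simp: space_pair_measure)
    then have "emeasure (D \<Otimes>\<^sub>M unif01) {x\<in>space (D \<Otimes>\<^sub>M unif01). snd (fst x) \<in> A} = emeasure D {z\<in>space D. snd z \<in> A} * emeasure unif01 (space unif01)"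
      using mA by (simp add: V.emeasure_pair_measure_Times)
    then show ?thesis
      by (simp add: p_def DV.emeasure_eq_measure D.emeasure_eq_measure V.emeasure_space_1)
  qed
  have clean: "cov_clean D n \<alpha> s = p + (1 - p) * (1 - H n k p)"
  proof -
    have "cov_clean D n \<alpha> s = measure (sample_space D n) {\<omega>\<in>space (sample_space D n).
            (\<lambda>i. if i < n then snd (fst (fst \<omega> i, snd \<omega> i)) \<in> A else if i = n then snd (fst \<omega> n) \<in> A else False) \<in> Ev}"
      unfolding cov_clean_def
    proof (intro arg_cong[where f="measure _"] Collect_cong conj_cong refl)
      fix \<omega> :: "(nat \<Rightarrow> 'x \<times> 'y) \<times> (nat \<Rightarrow> real)"
      have l: "map (\<lambda>i. case_prod s (fst \<omega> i)) [0..<n] = map (\<lambda>i. if snd (fst \<omega> i) \<in> A then (0::real) else 1) [0..<n]"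
        by (simp add: s_def split_beta)
      have t: "case_prod s (fst \<omega> n) = (if snd (fst \<omega> n) \<in> A then 0 else 1)" by (simp add: s_def split_beta)
      have "{i\<in>{..<n}. (if i < n then snd (fst \<omega> i) \<in> A else if i = n then snd (fst \<omega> n) \<in> A else False)}
           = {i\<in>{..<n}. snd (fst \<omega> i) \<in> A}" by auto
      note ceq = this
      have ce: "((if snd (fst \<omega> n) \<in> A then 0 else 1) \<le> kth_smallest k (map (\<lambda>i. if snd (fst \<omega> i) \<in> A then (0::real) else 1) [0..<n]))
          \<longleftrightarrow> ((if snd (fst \<omega> n) \<in> A then 0 else 1) = (0::real) \<or>
               length (filter (\<lambda>x. x = 0) (map (\<lambda>i. if snd (fst \<omega> i) \<in> A then (0::real) else 1) [0..<n])) < k)"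
        by (rule cov_event) (use k1 kn' in auto)
      show "(case_prod s (fst \<omega> n) \<le> kth_smallest (conf_rank n \<alpha>) (map (\<lambda>i. case_prod s (fst \<omega> i)) [0..<n]))
          = ((\<lambda>i. if i < n then snd (fst (fst \<omega> i, snd \<omega> i)) \<in> A else if i = n then snd (fst \<omega> n) \<in> A else False) \<in> Ev)"
        unfolding l t k_def[symmetric] Ev_def mem_Collect_eq ce count_zero fst_conv snd_conv ceq
        by simp
    qed
    also have "\<dots> = measure_pmf.prob (Pi_pmf {..n} False (\<lambda>i. bernoulli_pmf (if i < n then p else p))) Ev"
      by (subst cov_pattern[OF PD mc mA]) (simp only: pc p_def)
    also have "\<dots> = p + (1 - p) * (1 - H n k p)"
      unfolding Ev_def using pq by (intro prob_cov_pmf) auto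
    finally show ?thesis .
  qed
  have noisy: "cov_noisy D g n \<alpha> s = p + (1 - p) * (1 - H n k q)"
  proof -
    have "cov_noisy D g n \<alpha> s = measure (sample_space D n) {\<omega>\<in>space (sample_space D n).
            (\<lambda>i. if i < n then h (fst \<omega> i, snd \<omega> i) \<in> A else if i = n then snd (fst \<omega> n) \<in> A else False) \<in> Ev}"
      unfolding cov_noisy_def
    proof (intro arg_cong[where f="measure _"] Collect_cong conj_cong refl)
      fix \<omega> :: "(nat \<Rightarrow> 'x \<times> 'y) \<times> (nat \<Rightarrow> real)"
      have l: "map (\<lambda>i. s (fst (fst \<omega> i)) (g (snd (fst \<omega> i)) (snd \<omega> i))) [0..<n]
             = map (\<lambda>i. if h (fst \<omega> i, snd \<omega> i) \<in> A then (0::real) else 1) [0..<n]"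
        by (simp add: s_def h_def)
      have t: "case_prod s (fst \<omega> n) = (if snd (fst \<omega> n) \<in> A then 0 else 1)" by (simp add: s_def split_beta)
      have "{i\<in>{..<n}. (if i < n then h (fst \<omega> i, snd \<omega> i) \<in> A else if i = n then snd (fst \<omega> n) \<in> A else False)}
           = {i\<in>{..<n}. h (fst \<omega> i, snd \<omega> i) \<in> A}" by auto
      note ceq = this
      have ce: "((if snd (fst \<omega> n) \<in> A then 0 else 1) \<le> kth_smallest k (map (\<lambda>i. if h (fst \<omega> i, snd \<omega> i) \<in> A then (0::real) else 1) [0..<n]))
          \<longleftrightarrow> ((if snd (fst \<omega> n) \<in> A then 0 else 1) = (0::real) \<or>
               length (filter (\<lambda>x. x = 0) (map (\<lambda>i. if h (fst \<omega> i, snd \<omega> i) \<in> A then (0::real) else 1) [0..<n])) < k)"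
        by (rule cov_event) (use k1 kn' in auto)
      show "(case_prod s (fst \<omega> n) \<le> kth_smallest (conf_rank n \<alpha>) (map (\<lambda>i. s (fst (fst \<omega> i)) (g (snd (fst \<omega> i)) (snd \<omega> i))) [0..<n]))
          = ((\<lambda>i. if i < n then h (fst \<omega> i, snd \<omega> i) \<in> A else if i = n then snd (fst \<omega> n) \<in> A else False) \<in> Ev)"
        unfolding l t k_def[symmetric] Ev_def mem_Collect_eq ce count_zero ceq
        by simp
    qed
    also have "\<dots> = measure_pmf.prob (Pi_pmf {..n} False (\<lambda>i. bernoulli_pmf (if i < n then q else p))) Ev"
      by (subst cov_pattern[OF PD mn mA]) (simp only: q_def p_def)
    also have "\<dots> = p + (1 - p) * (1 - H n k q)"
      unfolding Ev_def using pq by (intro prob_cov_pmf) auto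
    finally show ?thesis .
  qed
  have "H n k p < H n k q" using H_strict[of p q k n] pq k1 kn' by auto
  moreover have "0 < 1 - p" using pq by auto
  ultimately have "cov_noisy D g n \<alpha> s < cov_clean D n \<alpha> s"
    unfolding clean noisy by (simp add: mult_strict_left_mono)
  then show ?thesis using smeas by blast
qed

end
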